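(* Let $r_1,\dots,r_N$ be rational numbers in arithmetic progression. Write $r_1=b/a$ and $d=r_2-r_1=v/u$ with $a,u$ positive integers, $b,v\in\mathbb{Z}$, $\gcd(a,b)=\gcd(u,v)=1$, and let $s=\operatorname{lcm}(a,u)$. Write $r_i=x_i/s$ with $x_i\in\mathbb{Z}$ for $1\le i\le N$. Let $0<\delta<1$ and set $m=\lceil 1/\delta\rceil$. If $s\ge\prod_{j=1}^{2m-1}j!$, then $$\big|\{\,i : \gcd(x_i,s)\le s^\delta\,\}\big|\ \ge\ \Big\lfloor \frac{N}{2m}\Big\rfloor.$$ *)

theory Defs
  imports Complex_Main
begin

end

theory Submission
  imports Defs
begin

lemma gcd_mult_dvd_nat: "gcd ((a::nat) * b) c dvd gcd a c * gcd b c"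
  by (simp add: gcd_mult_distrib_nat mult.commute)

lemma prod_rev_fact: "(\<Prod>k<K. (K - k)) = fact K"
proof (induction K)
  case (Suc K)
  have "(\<Prod>k<Suc K. (Suc K - k)) = (Suc K - 0) * (\<Prod>k<K. (Suc K - Suc k))"
    by (rule prod.lessThan_Suc_shift)
  also have "\<dots> = Suc K * fact K" using Suc by simp
  finally show ?case by simp
qed simp

lemma gcd_prod_dvd: "finite A \<Longrightarrow> gcd (\<Prod>k\<in>A. (f k::nat)) g dvd (\<Prod>k\<in>A. gcd (f k) g)"
proof (induction A rule: finite_induct)
  case (insert x F)
  have "gcd (f x * prod f F) g dvd gcd (f x) g * gcd (prod f F) g" by (rule gcd_mult_dvd_nat)
  also have "\<dots> dvd gcd (f x) g * (\<Prod>k\<in>F. gcd (f k) g)" using insert by simp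
  finally show ?case using insert by simp
qed simp

lemma prod_lcm_bound:
  fixes G :: "nat \<Rightarrow> nat"
  shows "(\<forall>k<K. G k > 0) \<Longrightarrow> (\<forall>i j. i < j \<longrightarrow> j < K \<longrightarrow> gcd (G i) (G j) dvd (j - i))
    \<Longrightarrow> (\<Prod>k<K. G k) \<le> Lcm (G ` {..<K}) * (\<Prod>j<K. fact j)"
proof (induction K)
  case 0
  then show ?case by simp
next
  case (Suc K)
  let ?L = "Lcm (G ` {..<K})"
  let ?P = "\<Prod>k<K. G k"
  let ?F = "\<Prod>j<K. (fact j :: nat)"
  have IH: "?P \<le> ?L * ?F" using Suc by auto
  have Lp: "?L dvd ?P" by (rule Lcm_least) (auto intro: dvd_prodI)
  have "gcd ?L (G K) dvd gcd ?P (G K)" by (rule gcd_mono[OF Lp dvd_refl])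
  also have "\<dots> dvd (\<Prod>k<K. gcd (G k) (G K))" by (rule gcd_prod_dvd) simp
  also have "\<dots> dvd (\<Prod>k<K. (K - k))" by (rule prod_dvd_prod) (use Suc.prems in auto)
  also have "\<dots> = fact K" by (rule prod_rev_fact)
  finally have gd: "gcd ?L (G K) \<le> fact K" by (rule dvd_imp_le) (simp)
  have L1: "Lcm (G ` {..<Suc K}) = lcm ?L (G K)"
    by (simp add: lessThan_Suc Lcm_insert lcm.commute)
  have "(\<Prod>k<Suc K. G k) = ?P * G K" by simp
  also have "\<dots> \<le> ?L * ?F * G K" using IH by simp
  also have "\<dots> = (?L * G K) * ?F" by simp
  also have "\<dots> = (gcd ?L (G K) * lcm ?L (G K)) * ?F" by (simp add: prod_gcd_lcm_nat[symmetric])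
  also have "\<dots> \<le> (fact K * lcm ?L (G K)) * ?F" using gd by (intro mult_right_mono) simp_all
  finally show ?case using L1 by (simp add: mult_ac)
qed

lemma pow_lt_prod:
  fixes f :: "nat \<Rightarrow> real"
  assumes "\<forall>k<K. t < f k" "0 \<le> t" "K > 0"
  shows "t ^ K < (\<Prod>k<K. f k)"
proof -
  obtain n where K: "K = Suc n" using assms(3) not0_implies_Suc by blast
  have "t ^ n \<le> (\<Prod>k<n. f k)"
    using prod_mono[of "{..<n}" "\<lambda>_. t" f] assms(1,2) K by (simp add: less_imp_le)
  moreover have P: "(\<Prod>k<n. f k) > 0" using assms(1,2) K by (intro prod_pos) (auto, meson le_less_trans less_SucI)
  moreover have "t < f n" using assms(1) K by simp
  ultimately have "t ^ n * t < (\<Prod>k<n. f k) * f n"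
    using assms(2) by (meson le_less_trans mult_right_mono mult_strict_left_mono)
  then show ?thesis using K by (simp add: mult.commute)
qed

theorem lemma5p1:
  fixes N :: nat and r :: "nat \<Rightarrow> rat"
    and a b u v :: int and x :: "nat \<Rightarrow> int" and \<delta> :: real
  assumes AP: "\<forall>i\<in>{1..N}. r i = r 1 + of_nat (i - 1) * (r 2 - r 1)"
    and a_pos: "a > 0" and r1: "r 1 = of_int b / of_int a" and cop_ab: "gcd a b = 1"
    and u_pos: "u > 0" and d: "r 2 - r 1 = of_int v / of_int u" and cop_uv: "gcd u v = 1"
    and x: "\<forall>i\<in>{1..N}. r i = of_int (x i) / of_int (lcm a u)"
    and \<delta>: "0 < \<delta>" "\<delta> < 1"
    and big: "real_of_int (lcm a u) \<ge> (\<Prod>j = 1..2 * nat \<lceil>1 / \<delta>\<rceil> - 1. fact j)"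
  shows "card {i \<in> {1..N}. real_of_int (gcd (x i) (lcm a u)) \<le> real_of_int (lcm a u) powr \<delta>}
           \<ge> N div (2 * nat \<lceil>1 / \<delta>\<rceil>)"
proof -
  define s where "s = lcm a u"
  define A where "A = s div a"
  define U where "U = s div u"
  have s_pos: "s > 0" unfolding s_def using a_pos u_pos by (simp add: lcm_pos_int)
  have sA: "s = a * A" unfolding A_def s_def by simp
  have sU: "s = u * U" unfolding U_def s_def by simp
  have A_pos: "A > 0" using sA s_pos a_pos by (simp add: zero_less_mult_iff)
  have U_pos: "U > 0" using sU s_pos u_pos by (simp add: zero_less_mult_iff)
  have copAU: "gcd A U = 1"
  proof -
    define e where "e = gcd A U"
    have e_pos: "e > 0" unfolding e_def using A_pos by simp
    obtain A' where A': "A = e * A'" unfolding e_def by (meson dvd_def gcd_dvd1)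
    obtain U' where U': "U = e * U'" unfolding e_def by (meson dvd_def gcd_dvd2)
    have k1: "s = e * (a * A')" using sA A' by (simp add: mult_ac)
    have k2: "a * A' = u * U'" using sA sU A' U' e_pos by (simp add: mult_ac)
    have "s dvd a * A'" unfolding s_def by (rule lcm_least) (simp, simp add: k2)
    moreover have "a * A' > 0" using k1 s_pos e_pos by (simp add: zero_less_mult_iff)
    ultimately have "s \<le> a * A'" by (simp add: zdvd_imp_le)
    then have "e * (a * A') \<le> 1 * (a * A')" using k1 by simp
    then have "e \<le> 1" using \<open>a * A' > 0\<close> by (rule mult_right_le_imp_le)
    then have "e = 1" using e_pos by linarith
    then show ?thesis using e_def by simp
  qed
  have xf: "x i = b * A + int (i - 1) * (v * U)" if "i \<in> {1..N}" for i
  proof -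
    have "of_int (x i) / of_int s = (of_int b / of_int a + of_nat (i - 1) * (of_int v / of_int u) :: rat)"
      using AP x that r1 d s_def by metis
    then have "(of_int (x i) :: rat) = of_int s * (of_int b / of_int a + of_nat (i - 1) * (of_int v / of_int u))"
      using s_pos by (simp add: field_simps)
    also have "\<dots> = of_int s * (of_int b / of_int a) + of_nat (i - 1) * (of_int s * (of_int v / of_int u))"
      by (simp add: algebra_simps)
    also have "\<dots> = of_int (b * A) + of_nat (i - 1) * of_int (v * U)"
    proof -
      have "(of_int s :: rat) * (of_int b / of_int a) = of_int (b * A)"
        using a_pos by (simp add: sA)
      moreover have "(of_int s :: rat) * (of_int v / of_int u) = of_int (v * U)"
        using u_pos by (simp add: sU)
      ultimately show ?thesis by simp
    qed
    also have "\<dots> = of_int (b * A + int (i - 1) * (v * U))" by simp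
    finally show ?thesis by (simp only: of_int_eq_iff)
  qed
  have cop: "coprime (gcd s (b * A)) (v * U)"
  proof -
    define e where "e = gcd (gcd s (b * A)) (v * U)"
    define e1 where "e1 = gcd e A"
    have e1A: "e1 dvd A" unfolding e1_def by simp
    have e1e: "e1 dvd e" unfolding e1_def by simp
    have cU: "coprime e1 U" using e1A copAU
      by (meson coprime_divisors coprime_iff_gcd_eq_1 dvd_refl)
    have "e1 dvd v * U" using e1e unfolding e_def by (meson dvd_trans gcd_dvd2)
    then have e1v: "e1 dvd v" using cU by (simp add: coprime_dvd_mult_left_iff)
    have "e1 dvd u * U" using e1e unfolding e_def sU[symmetric] by (meson dvd_trans gcd_dvd1)
    then have e1u: "e1 dvd u" using cU by (simp add: coprime_dvd_mult_left_iff)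
    have "e1 dvd gcd u v" using e1u e1v by simp
    then have "is_unit e1" using cop_uv by simp
    then have cA: "coprime e A" unfolding e1_def by (simp add: coprime_iff_gcd_eq_1 is_unit_gcd)
    have "e dvd b * A" unfolding e_def by (meson dvd_trans gcd_dvd1 gcd_dvd2)
    then have eb: "e dvd b" using cA by (simp add: coprime_dvd_mult_left_iff)
    have "e dvd a * A" unfolding e_def sA[symmetric] by (meson dvd_trans gcd_dvd1)
    then have ea: "e dvd a" using cA by (simp add: coprime_dvd_mult_left_iff)
    have "e dvd gcd a b" using ea eb by simp
    then have "is_unit e" using cop_ab by simp
    then show ?thesis unfolding e_def by (simp add: coprime_iff_gcd_eq_1 is_unit_gcd)
  qed
  define K where "K = 2 * nat \<lceil>1 / \<delta>\<rceil>"
  have K2: "K \<ge> 2"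
  proof -
    have "0 < 1 / \<delta>" using \<delta> by simp
    then have "0 < \<lceil>1 / \<delta>\<rceil>" by simp
    then show ?thesis unfolding K_def by linarith
  qed
  have Kd: "real K * \<delta> \<ge> 2"
  proof -
    have "1 / \<delta> \<le> real_of_int \<lceil>1 / \<delta>\<rceil>" by (rule le_of_int_ceiling)
    then have "1 / \<delta> * \<delta> \<le> real_of_int \<lceil>1 / \<delta>\<rceil> * \<delta>" using \<delta> by (intro mult_right_mono) auto
    then have "1 \<le> real_of_int \<lceil>1 / \<delta>\<rceil> * \<delta>" using \<delta> by simp
    moreover have "real K = 2 * real_of_int \<lceil>1 / \<delta>\<rceil>" unfolding K_def using \<delta> by simp
    ultimately show ?thesis by simp
  qed
  have s1: "real_of_int s \<ge> 1" using s_pos by simp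
  have bigK: "(\<Prod>j<K. fact j :: real) \<le> real_of_int s"
  proof -
    have "{..<K} = insert 0 {1..K-1}" using K2 by auto
    then have "(\<Prod>j<K. fact j :: real) = (\<Prod>j = 1..K-1. fact j)" by simp
    then show ?thesis using big unfolding K_def s_def by simp
  qed
  have diff: "x q - x p = int (q - p) * (v * U)" if "p \<in> {1..N}" "q \<in> {1..N}" "p \<le> q" for p q
  proof -
    have "x q - x p = (int (q - 1) - int (p - 1)) * (v * U)" using xf[OF that(1)] xf[OF that(2)] by (simp add: algebra_simps)
    also have "int (q - 1) - int (p - 1) = int (q - p)" using that by auto
    finally show ?thesis .
  qed
  have block: "\<exists>k<K. real_of_int (gcd (x (i0+k)) s) \<le> real_of_int s powr \<delta>"
    if i0: "1 \<le> i0" "i0 + K - 1 \<le> N" for i0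
  proof (rule ccontr)
    assume "\<not> ?thesis"
    then have bad: "\<forall>k<K. real_of_int s powr \<delta> < real_of_int (gcd (x (i0+k)) s)" by auto
    define G where "G k = nat (gcd (x (i0+k)) s)" for k
    have Gpos: "\<forall>k<K. G k > 0" unfolding G_def using s_pos by simp
    have Gdv: "G k dvd nat s" for k unfolding G_def using s_pos
      by (metis gcd_dvd2 gcd_ge_0_int nat_dvd_iff nat_int pos_int_cases)
    have Gg: "\<forall>i j. i < j \<longrightarrow> j < K \<longrightarrow> gcd (G i) (G j) dvd (j - i)"
    proof (intro allI impI)
      fix i j :: nat assume ij: "i < j" "j < K"
      define h where "h = gcd (gcd (x (i0+i)) s) (gcd (x (i0+j)) s)"
      have pN: "i0 + i \<in> {1..N}" "i0 + j \<in> {1..N}" using ij i0 by auto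
      have hs: "h dvd s" unfolding h_def by (meson dvd_trans gcd_dvd1 gcd_dvd2)
      have hp: "h dvd x (i0+i)" unfolding h_def by (meson dvd_trans gcd_dvd1)
      have hq: "h dvd x (i0+j)" unfolding h_def by (meson dvd_trans gcd_dvd1 gcd_dvd2)
      have "h dvd x (i0+j) - x (i0+i)" using hp hq by simp
      then have hd: "h dvd int (j - i) * (v * U)" using diff[OF pN(1) pN(2)] ij by simp
      have "coprime h (v * U)"
      proof -
        define c where "c = gcd h (v * U)"
        have cv: "c dvd v * U" unfolding c_def by simp
        have "c dvd x (i0+i)" unfolding c_def using hp by (meson dvd_trans gcd_dvd1)
        then have "c dvd x (i0+i) - int (i0 + i - 1) * (v * U)" using cv by simp
        then have "c dvd b * A" using xf[OF pN(1)] by simp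
        moreover have "c dvd s" unfolding c_def using hs by (meson dvd_trans gcd_dvd1)
        ultimately have "c dvd gcd (gcd s (b * A)) (v * U)" using cv by simp
        moreover have "gcd (gcd s (b * A)) (v * U) = 1" using cop by (simp add: coprime_iff_gcd_eq_1)
        ultimately have "is_unit c" by (metis dvd_1_left)
        then show ?thesis unfolding c_def by (simp add: coprime_iff_gcd_eq_1 is_unit_gcd)
      qed
      then have "h dvd int (j - i)" using hd by (simp add: coprime_dvd_mult_left_iff)
      moreover have "int (gcd (G i) (G j)) = h" unfolding G_def h_def
        by (simp add: gcd_int_int_eq[symmetric])
      ultimately show "gcd (G i) (G j) dvd (j - i)" by (metis int_dvd_int_iff)
    qed
    have "(\<Prod>k<K. G k) \<le> Lcm (G ` {..<K}) * (\<Prod>j<K. fact j)"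
      by (rule prod_lcm_bound[OF Gpos Gg])
    moreover have "Lcm (G ` {..<K}) \<le> nat s"
      by (rule dvd_imp_le) (auto intro: Lcm_least Gdv simp: s_pos)
    ultimately have "(\<Prod>k<K. G k) \<le> nat s * (\<Prod>j<K. fact j)"
      by (meson le_trans mult_le_mono1)
    then have "real (\<Prod>k<K. G k) \<le> real (nat s * (\<Prod>j<K. fact j))" by (simp only: of_nat_le_iff)
    then have P1: "(\<Prod>k<K. real_of_int (gcd (x (i0+k)) s)) \<le> real_of_int s * (\<Prod>j<K. fact j :: real)"
      using s_pos by (simp add: of_nat_prod G_def)
    have "(real_of_int s powr \<delta>) ^ K < (\<Prod>k<K. real_of_int (gcd (x (i0+k)) s))"
      by (rule pow_lt_prod) (use bad K2 in auto)
    moreover have "(real_of_int s powr \<delta>) ^ K = real_of_int s powr (real K * \<delta>)"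
      using s_pos by (simp add: powr_power)
    moreover have "real_of_int s powr (real K * \<delta>) \<ge> real_of_int s powr 2"
      by (rule powr_mono[OF Kd s1])
    moreover have "real_of_int s powr 2 = real_of_int s * real_of_int s"
      using s_pos by (simp add: power2_eq_square)
    moreover have "real_of_int s * (\<Prod>j<K. fact j :: real) \<le> real_of_int s * real_of_int s"
      using bigK s_pos by simp
    ultimately show False using P1 by linarith
  qed
  define Gd where "Gd = {i \<in> {1..N}. real_of_int (gcd (x i) s) \<le> real_of_int s powr \<delta>}"
  define f where "f t = (SOME i. i \<in> {t*K+1..t*K+K} \<and> i \<in> Gd)" for t
  have fin: "f t \<in> {t*K+1..t*K+K} \<and> f t \<in> Gd" if "t < N div K" for t
  proof -
    have "(t + 1) * K \<le> (N div K) * K" using that by (intro mult_right_mono) auto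
    also have "\<dots> \<le> N" by simp
    finally have "t * K + 1 + K - 1 \<le> N" by simp
    then obtain k where k: "k < K" "real_of_int (gcd (x (t*K+1+k)) s) \<le> real_of_int s powr \<delta>"
      using block[of "t*K+1"] by auto
    have "t*K+1+k \<in> {t*K+1..t*K+K} \<and> t*K+1+k \<in> Gd"
      using k \<open>t * K + 1 + K - 1 \<le> N\<close> unfolding Gd_def by auto
    then show ?thesis unfolding f_def by (rule someI)
  qed
  have finv: "(f t - 1) div K = t" if "t < N div K" for t
  proof -
    have "K * t \<le> f t - 1" "f t - 1 < K * Suc t" using fin[OF that] by (auto simp: mult.commute)
    then show ?thesis by (rule div_nat_eqI)
  qed
  have "inj_on f {..<N div K}"
    by (rule inj_onI) (metis finv lessThan_iff)
  moreover have "f ` {..<N div K} \<subseteq> Gd" using fin by auto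
  moreover have "finite Gd" unfolding Gd_def by simp
  ultimately have "card {..<N div K} \<le> card Gd" by (rule card_inj_on_le)
  then show ?thesis unfolding Gd_def K_def s_def by simp
qed
end
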